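(* Let $\lambda=\lambda_0\lambda_1\lambda_2\cdots$ be Levin's number, regarded as the real number with binary expansion $0.\lambda_0\lambda_1\lambda_2\ldots$, and let $x_n=\{2^n\lambda\}$ for $n\ge1$. For every $d\ge 1$, with $e=2^d$ and $N=2^{e+d+1}$, the pair correlation function of $(x_n)_{n\ge1}$ satisfies $$F_N(2)\ \ge\ \frac{(e-d+1)(e-d)}{8e}.$$ In particular $F_N(2)\to\infty$ along $N=2^{2^d+d+1}$ as $d\to\infty$, so $(\{2^n\lambda\})_{n\ge1}$ does not have Poissonian pair correlations.
   Context: Over $\mathbb{F}_2$, $M_0=(1)$ and $M_{d+1}=\begin{pmatrix} M_d & M_d\\ 0 & M_d\end{pmatrix}$, so $M_d$ is $e\times e$ with $e=2^d$. $w_0,\dots,w_{2^e-1}$ are all vectors of $\mathbb{F}_2^e$ in increasing lexicographic order. Binary words and vectors are identified. $\lambda_d=(M_dw_0)(M_dw_1)\cdots(M_dw_{2^e-1})$ and Levin's number is $\lambda=\lambda_0\lambda_1\lambda_2\cdots$. For real $x$, $\{x\}=x-\lfloor x\rfloor$ and $\Vert x\Vert$ is the distance to the nearest integer. $F_N(s)=\frac1N\#\{(i,j):1\le i\ne j\le N,\ \Vert x_i-x_j\Vert<s/N\}$; a sequence has Poissonian pair correlations if $\lim_{N\to\infty}F_N(s)=2s$ for every $s\ge0$. *)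

theory Defs
  imports Complex_Main
begin

text \<open>The matrix M_d over F_2 (entries as booleans, indices 0-based, i, j < 2^d):
  M_0 = (1), M_{d+1} = [[M_d, M_d], [0, M_d]].\<close>
fun levinM :: "nat \<Rightarrow> nat \<Rightarrow> nat \<Rightarrow> bool" where
  "levinM 0 i j = True"
| "levinM (Suc d) i j =
     (if i < 2 ^ d then levinM d i (if j < 2 ^ d then j else j - 2 ^ d)
      else (2 ^ d \<le> j \<and> levinM d (i - 2 ^ d) (j - 2 ^ d)))"

text \<open>w_k: the k-th vector of F_2^e in increasing lexicographic order
  (component t, 0-based from the left, is binary digit e-1-t of k).\<close>
definition lexvec :: "nat \<Rightarrow> nat \<Rightarrow> nat \<Rightarrow> bool" where
  "lexvec e k t = odd (k div 2 ^ (e - 1 - t))"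

definition levinMw :: "nat \<Rightarrow> nat \<Rightarrow> nat \<Rightarrow> bool" where
  "levinMw d k i = odd (card {j. j < 2 ^ d \<and> levinM d i j \<and> lexvec (2 ^ d) k j})"

definition levin_word :: "nat \<Rightarrow> bool list" where
  "levin_word d = concat (map (\<lambda>k. map (levinMw d k) [0..<2 ^ d]) [0..<2 ^ (2 ^ d)])"

text \<open>The p-th binary digit (0-based) of lambda_0 lambda_1 lambda_2 ...; every block is
  nonempty, so the first p+1 blocks contain position p.\<close>
definition levin_bit :: "nat \<Rightarrow> bool" where
  "levin_bit p = concat (map levin_word [0..<Suc p]) ! p"

definition levin :: real where
  "levin = (\<Sum>p. (if levin_bit p then 1 else 0) / 2 ^ (p + 1))"

definition frac_part :: "real \<Rightarrow> real" where
  "frac_part x = x - of_int \<lfloor>x\<rfloor>"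

definition dist_int :: "real \<Rightarrow> real" where
  "dist_int x = \<bar>x - of_int (round x)\<bar>"

definition pair_corr :: "(nat \<Rightarrow> real) \<Rightarrow> nat \<Rightarrow> real \<Rightarrow> real" where
  "pair_corr x N s = real (card {(i, j). i \<in> {1..N} \<and> j \<in> {1..N} \<and> i \<noteq> j \<and>
       dist_int (x i - x j) < s / real N}) / real N"

definition poissonian_pc :: "(nat \<Rightarrow> real) \<Rightarrow> bool" where
  "poissonian_pc x \<longleftrightarrow> (\<forall>s\<ge>0. (\<lambda>N. pair_corr x N s) \<longlonglongrightarrow> 2 * s)"

end

theory Submission
  imports Defs
begin

definition L :: "nat \<Rightarrow> nat" where "L j = 2^j * 2^(2^j)"
definition P :: "nat \<Rightarrow> nat" where "P d = (\<Sum>j<d. L j)"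

lemma len_word: "length (levin_word d) = L d"
  unfolding levin_word_def L_def by (simp add: length_concat o_def sum_list_triv)

lemma len_concat_words: "length (concat (map levin_word [0..<d])) = P d"
  by (induction d) (simp_all add: P_def len_word)

lemma L_pos: "L j \<ge> 1" unfolding L_def by simp

lemma P_ge: "P d \<ge> d"
  by (induction d) (auto simp: P_def intro: order_trans[OF _ add_mono[OF _ L_pos]])

lemma levin_bit_block:
  assumes "r < L d"
  shows "levin_bit (P d + r) = levin_word d ! r"
proof -
  have dp: "d \<le> P d + r" using P_ge[of d] by linarith
  obtain rest where c: "concat (map levin_word [0..<Suc (P d + r)]) = concat (map levin_word [0..<d]) @ (levin_word d @ rest)"
  proof -
    have "[0..<Suc (P d + r)] = [0..<d] @ [d..<Suc (P d + r)]" using upt_add_eq_append[of 0 d "Suc (P d + r) - d"] dp by simp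
    also have "[d..<Suc (P d + r)] = d # [Suc d..<Suc (P d + r)]" using dp by (simp add: upt_conv_Cons)
    finally show ?thesis using that by simp
  qed
  have "levin_bit (P d + r) = (concat (map levin_word [0..<d]) @ (levin_word d @ rest)) ! (P d + r)"
    unfolding levin_bit_def c ..
  also have "\<dots> = (levin_word d @ rest) ! r"
    by (simp add: nth_append len_concat_words)
  also have "\<dots> = levin_word d ! r"
    using assms by (simp add: nth_append len_word)
  finally show ?thesis .
qed

lemma concat_block_nth:
  assumes "\<forall>j<n. length (f j) = e" "k < n" "i < e"
  shows "concat (map f [0..<n]) ! (e*k+i) = f k ! i"
  using assms
proof (induction n)
  case 0 then show ?case by simp
next
  case (Suc n)
  have len: "length (concat (map f [0..<n])) = e * n"
    using Suc.prems(1) by (induction n) (auto simp: length_concat)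
  show ?case
  proof (cases "k < n")
    case True
    have "e*k + i < e*(Suc k)" using Suc.prems(3) by simp
    also have "\<dots> \<le> e*n" using True by (intro mult_le_mono2) simp
    finally have "e*k + i < e*n" .
    then show ?thesis using Suc True by (simp add: nth_append len)
  next
    case False
    then have "k = n" using Suc.prems(2) by simp
    then show ?thesis using Suc.prems by (simp add: nth_append len)
  qed
qed

lemma word_nth:
  assumes "k < 2^(2^d)" "i < 2^d"
  shows "levin_word d ! (2^d*k+i) = levinMw d k i"
proof -
  have "levin_word d ! (2^d*k+i) = map (levinMw d k) [0..<2^d] ! i"
    unfolding levin_word_def
    by (rule concat_block_nth[where f="\<lambda>k. map (levinMw d k) [0..<2^d]"]) (simp_all only: length_map length_upt diff_zero assms, simp)
  also have "\<dots> = levinMw d k i" using assms(2) by simp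
  finally show ?thesis .
qed

lemma levin_bit_loc:
  assumes "k < 2^(2^d)" "i < 2^d"
  shows "levin_bit (P d + 2^d*k + i) = levinMw d k i"
proof -
  have "2^d*k + i < 2^d*(k+1)" using assms(2) by simp
  also have "\<dots> \<le> 2^d * 2^(2^d)" using assms(1) by (intro mult_le_mono2) simp
  finally have lt: "2^d*k + i < L d" by (simp add: L_def)
  have "levin_bit (P d + 2^d*k + i) = levin_word d ! (2^d*k + i)"
    using levin_bit_block[OF lt] by (simp add: add.assoc)
  then show ?thesis using word_nth[OF assms] by simp
qed


lemma row0: "levinM d 0 j"
  by (induction d arbitrary: j) auto

lemma lex_low:
  fixes h :: nat
  assumes "k < 2^h" "t < h"
  shows "\<not> lexvec (2*h) k t"
proof -
  have "2^h \<le> (2::nat)^(2*h-1-t)" using assms(2) by (intro power_increasing) auto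
  then have "k < 2^(2*h-1-t)" using assms(1) by linarith
  then have "k div 2^(2*h-1-t) = 0" by simp
  then show ?thesis unfolding lexvec_def by simp
qed

lemma lex_high:
  fixes h :: nat
  assumes "t < h"
  shows "lexvec (2*h) k (t+h) = lexvec h k t"
proof -
  have "2*h-1-(t+h) = h-1-t" using assms by simp
  then show ?thesis unfolding lexvec_def by simp
qed

lemma doubled:
  assumes "k < 2^(2^d)" "j < 2*2^d"
  shows "levinMw (Suc d) k j = levinMw d k (j mod 2^d)"
proof -
  define h :: nat where "h = 2^d"
  have hpos: "0 < h" unfolding h_def by simp
  have k: "k < 2^h" using assms(1) unfolding h_def .
  have jm: "j mod h = (if j < h then j else j - h)"
  proof (cases "j < h")
    case False
    then have "j mod h = (j - h) mod h" by (simp add: le_mod_geq)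
    also have "\<dots> = j - h" using False assms(2) by (simp add: h_def)
    finally show ?thesis using False by simp
  qed simp
  have "{t. t < 2^Suc d \<and> levinM (Suc d) j t \<and> lexvec (2^Suc d) k t}
      = (\<lambda>t. t + h) ` {t. t < h \<and> levinM d (j mod h) t \<and> lexvec h k t}"
  proof (rule set_eqI, rule iffI)
    fix t assume "t \<in> {t. t < 2^Suc d \<and> levinM (Suc d) j t \<and> lexvec (2^Suc d) k t}"
    then have t: "t < 2*h" "levinM (Suc d) j t" "lexvec (2*h) k t" by (auto simp: h_def)
    have "\<not> t < h" using lex_low[OF k] t(3) by blast
    moreover have "t = (t - h) + h" "t - h < h" using t(1) \<open>\<not> t < h\<close> by auto
    ultimately obtain t' where t': "t = t' + h" "t' < h" by blast
    have "levinM d (j mod h) t'" using t(2) t' assms(2)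
      by (cases "j < h") (auto simp: h_def[symmetric] jm split: if_splits)
    moreover have "lexvec h k t'" using t(3) t' lex_high by simp
    ultimately show "t \<in> (\<lambda>t. t + h) ` {t. t < h \<and> levinM d (j mod h) t \<and> lexvec h k t}"
      using t' by auto
  next
    fix t assume "t \<in> (\<lambda>t. t + h) ` {t. t < h \<and> levinM d (j mod h) t \<and> lexvec h k t}"
    then obtain t' where t': "t = t' + h" "t' < h" "levinM d (j mod h) t'" "lexvec h k t'" by auto
    have "levinM (Suc d) j t" using t' assms(2)
      by (cases "j < h") (auto simp: h_def[symmetric] jm)
    moreover have "lexvec (2*h) k t" using t' lex_high by simp
    ultimately show "t \<in> {t. t < 2^Suc d \<and> levinM (Suc d) j t \<and> lexvec (2^Suc d) k t}"
      using t' by (auto simp: h_def)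
  qed
  moreover have "inj (\<lambda>t::nat. t + h)" by (simp add: inj_def)
  ultimately have "card {t. t < 2^Suc d \<and> levinM (Suc d) j t \<and> lexvec (2^Suc d) k t}
      = card {t. t < h \<and> levinM d (j mod h) t \<and> lexvec h k t}"
    by (simp add: card_image inj_on_def)
  then show ?thesis unfolding levinMw_def h_def by simp
qed


lemma card_split2:
  fixes h :: nat
  shows "card {i. i < 2*h \<and> Q i} = card {i. i < h \<and> Q i} + card {i. i < h \<and> Q (i+h)}"
proof -
  have "{i. i < 2*h \<and> Q i} = {i. i < h \<and> Q i} \<union> (\<lambda>i. i+h) ` {i. i < h \<and> Q (i+h)}"
  proof (rule set_eqI, rule iffI)
    fix x assume x: "x \<in> {i. i < 2*h \<and> Q i}"
    show "x \<in> {i. i < h \<and> Q i} \<union> (\<lambda>i. i+h) ` {i. i < h \<and> Q (i+h)}"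
    proof (cases "x < h")
      case False
      have "x - h \<in> {i. i < h \<and> Q (i+h)}" using x False by auto
      moreover have "x = (x - h) + h" using False by simp
      ultimately have "x \<in> (\<lambda>i. i+h) ` {i. i < h \<and> Q (i+h)}" by (rule image_eqI[rotated])
      then show ?thesis by blast
    qed (use x in auto)
  qed auto
  moreover have "card ((\<lambda>i. i+h) ` {i. i < h \<and> Q (i+h)}) = card {i. i < h \<and> Q (i+h)}"
    by (rule card_image) (simp add: inj_on_def)
  moreover have "{i. i < h \<and> Q i} \<inter> (\<lambda>i. i+h) ` {i. i < h \<and> Q (i+h)} = {}" by auto
  ultimately show ?thesis by (simp add: card_Un_disjoint)
qed

lemma col_odd:
  assumes "j < 2^d"
  shows "odd (card {i. i < 2^d \<and> levinM d i j}) \<longleftrightarrow> j = 0"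
  using assms
proof (induction d arbitrary: j)
  case 0
  then have "{i. i < 2^0 \<and> levinM 0 i j} = {0}" by auto
  then show ?case using 0 by simp
next
  case (Suc d)
  define h :: nat where "h = 2^d"
  have c: "card {i. i < 2^Suc d \<and> levinM (Suc d) i j}
     = card {i. i < h \<and> levinM (Suc d) i j} + card {i. i < h \<and> levinM (Suc d) (i+h) j}"
    using card_split2[of h "\<lambda>i. levinM (Suc d) i j"] by (simp add: h_def)
  show ?case
  proof (cases "j < h")
    case True
    have "{i. i < h \<and> levinM (Suc d) (i+h) j} = {}" using True by (auto simp: h_def)
    moreover have "{i. i < h \<and> levinM (Suc d) i j} = {i. i < 2^d \<and> levinM d i j}"
      using True by (auto simp: h_def)
    ultimately show ?thesis using c Suc.IH[of j] True by (simp add: h_def)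
  next
    case False
    have "{i. i < h \<and> levinM (Suc d) (i+h) j} = {i. i < h \<and> levinM d i (j-h)}"
      using False by (auto simp: h_def)
    moreover have "{i. i < h \<and> levinM (Suc d) i j} = {i. i < h \<and> levinM d i (j-h)}"
      using False by (auto simp: h_def)
    moreover have "j \<noteq> 0" proof - have "h > 0" by (simp add: h_def) then show ?thesis using False by auto qed
    ultimately show ?thesis using c by simp
  qed
qed

lemma oddrow_odd:
  assumes "1 \<le> d" "j < 2^d"
  shows "odd (card {i. i < 2^d \<and> odd i \<and> levinM d i j}) \<longleftrightarrow> j = 1"
  using assms
proof (induction d arbitrary: j)
  case 0
  then show ?case by simp
next
  case (Suc d)
  show ?case
  proof (cases "d = 0")
    case True
    have "{i. i < 2 \<and> odd i \<and> levinM 1 i j} = (if j = 1 then {1} else {})"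
      using Suc.prems True by (auto simp: less_2_cases_iff)
    then show ?thesis using True by simp
  next
    case False
    define h :: nat where "h = 2^d"
    have ev: "even h" using False by (simp add: h_def)
    have c: "card {i. i < 2^Suc d \<and> odd i \<and> levinM (Suc d) i j}
       = card {i. i < h \<and> odd i \<and> levinM (Suc d) i j} + card {i. i < h \<and> odd (i+h) \<and> levinM (Suc d) (i+h) j}"
      using card_split2[of h "\<lambda>i. odd i \<and> levinM (Suc d) i j"] by (simp add: h_def)
    have IH: "\<And>j. j < 2^d \<Longrightarrow> odd (card {i. i < 2^d \<and> odd i \<and> levinM d i j}) \<longleftrightarrow> j = 1"
      using Suc.IH False by simp
    show ?thesis
    proof (cases "j < h")
      case True
      have "{i. i < h \<and> odd (i+h) \<and> levinM (Suc d) (i+h) j} = {}" using True by (auto simp: h_def)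
      moreover have "{i. i < h \<and> odd i \<and> levinM (Suc d) i j} = {i. i < 2^d \<and> odd i \<and> levinM d i j}"
        using True by (auto simp: h_def)
      ultimately show ?thesis using c IH[of j] True by (simp add: h_def)
    next
      case False
      have "{i. i < h \<and> odd (i+h) \<and> levinM (Suc d) (i+h) j} = {i. i < h \<and> odd i \<and> levinM d i (j-h)}"
        using False ev by (auto simp: h_def)
      moreover have "{i. i < h \<and> odd i \<and> levinM (Suc d) i j} = {i. i < h \<and> odd i \<and> levinM d i (j-h)}"
        using False by (auto simp: h_def)
      moreover have "j \<noteq> 1"
      proof -
        have "h \<ge> 2" using \<open>d \<noteq> 0\<close> unfolding h_def by (cases d) auto
        then show ?thesis using False by auto
      qed
      ultimately show ?thesis using c by simp
    qed
  qed
qed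

lemma cls_even:
  assumes "1 \<le> d" "j < 2^d" "2 \<le> j" "c < 2"
  shows "even (card {t. t < 2^d \<and> t mod 2 = c \<and> levinM d t j})"
proof -
  have o: "even (card {i. i < 2^d \<and> odd i \<and> levinM d i j})" using oddrow_odd[OF assms(1,2)] assms(3) by auto
  have a: "even (card {i. i < 2^d \<and> levinM d i j})" using col_odd[OF assms(2)] assms(3) by auto
  have u: "{i. i < 2^d \<and> levinM d i j} = {i. i < 2^d \<and> even i \<and> levinM d i j} \<union> {i. i < 2^d \<and> odd i \<and> levinM d i j}" by auto
  have "card {i. i < 2^d \<and> levinM d i j} = card {i. i < 2^d \<and> even i \<and> levinM d i j} + card {i. i < 2^d \<and> odd i \<and> levinM d i j}"
    unfolding u by (rule card_Un_disjoint) auto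
  then have e: "even (card {i. i < 2^d \<and> even i \<and> levinM d i j})" using o a by simp
  show ?thesis
  proof (cases "c = 0")
    case True
    have "{t. t < 2^d \<and> t mod 2 = c \<and> levinM d t j} = {i. i < 2^d \<and> even i \<and> levinM d i j}"
      using True by (auto simp: even_iff_mod_2_eq_zero)
    then show ?thesis using e by simp
  next
    case False
    then have "c = 1" using assms(4) by simp
    have "{t. t < 2^d \<and> t mod 2 = c \<and> levinM d t j} = {i. i < 2^d \<and> odd i \<and> levinM d i j}"
      using \<open>c = 1\<close> by (auto simp: odd_iff_mod_2_eq_one)
    then show ?thesis using o by simp
  qed
qed

lemma class_even:
  assumes "1 \<le> d" "k < 2^(2^d - 2)" "c < 2"
  shows "even (\<Sum>t | t < 2^d \<and> t mod 2 = c. (of_bool (levinMw d k t) :: nat))"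
proof -
  define e :: nat where "e = 2^d"
  have e2: "2 \<le> e" using assms(1) unfolding e_def
    using power_increasing[of 1 d "2::nat"] by simp
  define A where "A = {t. t < e \<and> t mod 2 = c}"
  have finA: "finite A" unfolding A_def by simp
  define X where "X t = {j. j < e \<and> levinM d t j \<and> lexvec e k j}" for t
  have lex01: "\<not> lexvec e k j" if "j < 2" for j
  proof -
    have "(2::nat)^(e-2) \<le> 2^(e-1-j)" using that e2 by (intro power_increasing) auto
    then have "k < 2^(e-1-j)" using assms(2) unfolding e_def by linarith
    then show ?thesis unfolding lexvec_def by simp
  qed
  have "(\<Sum>t\<in>A. (of_bool (levinMw d k t) :: nat)) mod 2 = (\<Sum>t\<in>A. card (X t) mod 2) mod 2"
    unfolding levinMw_def X_def e_def of_bool_odd_eq_mod_2 by simp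
  also have "\<dots> = (\<Sum>t\<in>A. card (X t)) mod 2" by (simp add: mod_sum_eq)
  also have "(\<Sum>t\<in>A. card (X t)) = (\<Sum>t\<in>A. \<Sum>j<e. (of_bool (levinM d t j \<and> lexvec e k j) :: nat))"
  proof (rule sum.cong)
    fix t show "card (X t) = (\<Sum>j<e. (of_bool (levinM d t j \<and> lexvec e k j) :: nat))"
      unfolding X_def by (simp add: lessThan_def Collect_conj_eq[symmetric] conj_commute)
  qed simp
  also have "\<dots> = (\<Sum>j<e. \<Sum>t\<in>A. (of_bool (levinM d t j \<and> lexvec e k j) :: nat))"
    by (rule sum.swap)
  finally have eq: "(\<Sum>t\<in>A. (of_bool (levinMw d k t) :: nat)) mod 2 = (\<Sum>j<e. \<Sum>t\<in>A. (of_bool (levinM d t j \<and> lexvec e k j) :: nat)) mod 2" .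
  have "even (\<Sum>j<e. \<Sum>t\<in>A. (of_bool (levinM d t j \<and> lexvec e k j) :: nat))"
  proof (rule dvd_sum)
    fix j assume j: "j \<in> {..<e}"
    show "2 dvd (\<Sum>t\<in>A. (of_bool (levinM d t j \<and> lexvec e k j) :: nat))"
    proof (cases "lexvec e k j")
      case False then show ?thesis by simp
    next
      case True
      then have "2 \<le> j" using lex01 by (meson not_le)
      then have "even (card {t. t < 2^d \<and> t mod 2 = c \<and> levinM d t j})"
        using cls_even[OF assms(1) _ _ assms(3)] j by (simp add: e_def)
      moreover have "A \<inter> {t. levinM d t j} = {t. t < 2^d \<and> t mod 2 = c \<and> levinM d t j}"
        unfolding A_def e_def by auto
      ultimately show ?thesis using True finA by simp
    qed
  qed
  then show ?thesis using eq unfolding A_def e_def by (simp add: even_iff_mod_2_eq_zero)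
qed


definition bb :: "nat \<Rightarrow> real" where "bb p = (if levin_bit p then 1 else 0)"
definition TT :: "nat \<Rightarrow> real" where "TT n = (\<Sum>q. bb (n+q) / 2^(q+1))"

lemma bb_bounds: "0 \<le> bb p" "bb p \<le> 1" unfolding bb_def by auto

lemma summable_T: "summable (\<lambda>q. bb (n+q) / 2^(q+1))"
proof (rule summable_comparison_test[OF _ sums_summable[OF power_half_series]])
  show "\<exists>N. \<forall>q\<ge>N. norm (bb (n+q) / 2^(q+1)) \<le> (1/2::real)^Suc q"
    using bb_bounds by (auto simp: power_divide divide_le_cancel intro!: exI[of _ 0])
qed

lemma T_bounds: "0 \<le> TT n" "TT n \<le> 1"
proof -
  show "0 \<le> TT n" unfolding TT_def by (rule suminf_nonneg[OF summable_T]) (simp add: bb_bounds)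
  have "TT n \<le> (\<Sum>q. (1/2::real)^Suc q)" unfolding TT_def
    by (rule suminf_le[OF _ summable_T sums_summable[OF power_half_series]])
       (use bb_bounds in \<open>auto simp: power_divide divide_le_cancel\<close>)
  then show "TT n \<le> 1" using sums_unique[OF power_half_series] by simp
qed

lemma T_rec: "TT n = bb n / 2 + TT (Suc n) / 2"
proof -
  have "(\<Sum>q. bb (n + Suc q) / 2^(Suc q+1)) = TT n - bb n / 2"
    unfolding TT_def using suminf_split_head[OF summable_T[of n]] by simp
  moreover have "(\<Sum>q. bb (n + Suc q) / 2^(Suc q+1)) = (\<Sum>q. bb (Suc n + q) / 2^(q+1)) / 2"
    by (subst suminf_divide[OF summable_T, symmetric]) simp
  ultimately show ?thesis unfolding TT_def by simp
qed

lemma levin_T0: "levin = TT 0"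
  unfolding levin_def TT_def bb_def by simp

lemma levin_int: "\<exists>z::int. 2^n * levin = of_int z + TT n"
proof (induction n)
  case 0 then show ?case using levin_T0 by (intro exI[of _ 0]) simp
next
  case (Suc n)
  then obtain z where z: "2^n * levin = of_int z + TT n" by blast
  have "2^Suc n * levin = 2 * (of_int z + TT n)" using z by simp
  also have "\<dots> = of_int (2*z + (if levin_bit n then 1 else 0)) + TT (Suc n)"
    using T_rec[of n] by (simp add: bb_def algebra_simps)
  finally show ?case by blast
qed

lemma frac_T: "frac_part (2^n * levin) = TT n - of_int \<lfloor>TT n\<rfloor>"
proof -
  obtain z where z: "2^n * levin = of_int z + TT n" using levin_int by blast
  have "\<lfloor>of_int z + TT n\<rfloor> = z + \<lfloor>TT n\<rfloor>"
    using floor_add_int[of "TT n" z] by (simp add: add.commute)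
  then show ?thesis unfolding frac_part_def z by simp
qed

lemma dist_T: "dist_int (frac_part (2^i * levin) - frac_part (2^j * levin)) \<le> \<bar>TT i - TT j\<bar>"
proof -
  let ?y = "frac_part (2^i * levin) - frac_part (2^j * levin)"
  have "?y - of_int (\<lfloor>TT j\<rfloor> - \<lfloor>TT i\<rfloor>) = TT i - TT j" unfolding frac_T by simp
  then show ?thesis unfolding dist_int_def using round_diff_minimal[of ?y "\<lfloor>TT j\<rfloor> - \<lfloor>TT i\<rfloor>"] by simp
qed

lemma T_shift:
  assumes "\<forall>q<m. levin_bit (i+q) = levin_bit (j+q)"
  shows "TT i - TT j = (TT (i+m) - TT (j+m)) / 2^m"
  using assms
proof (induction m arbitrary: i j)
  case 0 then show ?case by simp
next
  case (Suc m)
  have "bb i = bb j" using Suc.prems by (auto simp: bb_def dest: spec[of _ 0])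
  then have "TT i - TT j = (TT (Suc i) - TT (Suc j)) / 2" using T_rec[of i] T_rec[of j] by simp
  also have "TT (Suc i) - TT (Suc j) = (TT (Suc i + m) - TT (Suc j + m)) / 2^m"
    using Suc.prems by (intro Suc.IH) auto
  finally show ?case by simp
qed

lemma aux_le: "C \<le> 1 - w \<Longrightarrow> A = B/2 + C/2 \<Longrightarrow> B \<le> 1 \<Longrightarrow> A \<le> 1/2 + (1-w)/(2::real)" unfolding diff_divide_distrib by linarith
lemma aux_ge: "w \<le> C \<Longrightarrow> A = B/2 + C/2 \<Longrightarrow> 0 \<le> B \<Longrightarrow> w/2 \<le> (A::real)" by linarith

lemma T_upper: "\<not> levin_bit (a+r) \<Longrightarrow> TT a \<le> 1 - 1/2^(r+1)"
proof (induction r arbitrary: a)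
  case 0
  then have "bb a = 0" by (simp add: bb_def)
  then show ?case using T_rec[of a] T_bounds[of "Suc a"] by simp
next
  case (Suc r)
  then have "TT (Suc a) \<le> 1 - 1/2^(r+1)" by simp
  then have "TT a \<le> 1/2 + (1 - 1/2^(r+1))/2" by (rule aux_le[OF _ T_rec[of a] bb_bounds(2)])
  also have "\<dots> = 1 - 1/2^(Suc r+1)" by (simp add: field_simps)
  finally show ?case .
qed

lemma T_lower: "levin_bit (a+r) \<Longrightarrow> TT a \<ge> 1/2^(r+1)"
proof (induction r arbitrary: a)
  case 0
  then have "bb a = 1" by (simp add: bb_def)
  then show ?case using T_rec[of a] T_bounds[of "Suc a"] by simp
next
  case (Suc r)
  then have "TT (Suc a) \<ge> 1/2^(r+1)" by simp
  then have "TT a \<ge> (1/2^(r+1))/2" by (rule aux_ge[OF _ T_rec[of a] bb_bounds(1)])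
  also have "(1/2^(r+1))/2 = (1::real)/2^(Suc r+1)" by (simp add: field_simps)
  finally show ?case .
qed

lemma T_diff_lt:
  assumes "\<forall>q. \<exists>p\<ge>q. \<not> levin_bit p" "\<forall>q. \<exists>p\<ge>q. levin_bit p"
  shows "\<bar>TT a - TT c\<bar> < 1"
proof -
  obtain p where p: "p \<ge> a" "\<not> levin_bit p" using assms(1) by blast
  obtain p' where p': "p' \<ge> a" "levin_bit p'" using assms(2) by blast
  have "TT a \<le> 1 - 1/2^(p-a+1)" using T_upper[of a "p-a"] p by simp
  moreover have "TT a \<ge> 1/2^(p'-a+1)" using T_lower[of a "p'-a"] p' by simp
  moreover have "(0::real) < 1/2^(p-a+1)" "(0::real) < 1/2^(p'-a+1)" by simp_all
  ultimately show ?thesis using T_bounds[of c] by linarith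
qed

lemma close_pair:
  assumes "\<forall>q. \<exists>p\<ge>q. \<not> levin_bit p" "\<forall>q. \<exists>p\<ge>q. levin_bit p"
    and "\<forall>q<m. levin_bit (i+q) = levin_bit (j+q)"
  shows "dist_int (frac_part (2^i * levin) - frac_part (2^j * levin)) < 1 / 2^m"
proof -
  have "\<bar>TT i - TT j\<bar> = \<bar>TT (i+m) - TT (j+m)\<bar> / 2^m" using T_shift[OF assms(3)] by simp
  also have "\<dots> < 1 / 2^m" using T_diff_lt[OF assms(1,2)] by (simp add: divide_strict_right_mono)
  finally show ?thesis using dist_T[of i j] by linarith
qed


lemma rot_inj:
  fixes e s :: nat
  assumes "i < e" "j < e" "(s+i) mod e = (s+j) mod e"
  shows "i = j"
proof -
  have "int ((s+i) mod e) = int ((s+j) mod e)" using assms(3) by simp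
  then have "(int s + int i) mod int e = (int s + int j) mod int e"
    by (simp only: zmod_int of_nat_add)
  then have "int e dvd (int s + int i) - (int s + int j)" by (simp only: mod_eq_dvd_iff)
  then have "int e dvd int i - int j" by simp
  then have "int i mod int e = int j mod int e" by (simp only: mod_eq_dvd_iff)
  then have "int (i mod e) = int (j mod e)" by (simp only: zmod_int)
  then have "i mod e = j mod e" by (simp only: of_nat_eq_iff)
  then show ?thesis using assms(1,2) by simp
qed

lemma rot_bij:
  fixes e s :: nat
  assumes "0 < e"
  shows "bij_betw (\<lambda>i. (s+i) mod e) {..<e} {..<e}"
proof -
  have inj: "inj_on (\<lambda>i. (s+i) mod e) {..<e}" by (auto simp: inj_on_def intro: rot_inj)
  have sub: "(\<lambda>i. (s+i) mod e) ` {..<e} \<subseteq> {..<e}" using assms by auto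
  have "(\<lambda>i. (s+i) mod e) ` {..<e} = {..<e}"
    by (rule endo_inj_surj[OF _ sub inj]) simp
  then show ?thesis using inj by (simp add: bij_betw_def)
qed

lemma rot_sum:
  fixes e s :: nat and g :: "nat \<Rightarrow> nat"
  assumes "0 < e"
  shows "(\<Sum>i<e. g ((s+i) mod e)) = (\<Sum>t<e. g t)"
  using sum.reindex_bij_betw[OF rot_bij[OF assms, of s], of g] by simp

lemma rot_class_sum:
  fixes e s c :: nat and f :: "nat \<Rightarrow> nat"
  assumes "0 < e" "even e" "c < 2"
  shows "(\<Sum>i | i < e \<and> i mod 2 = c. f ((s+i) mod e)) = (\<Sum>t | t < e \<and> t mod 2 = (c+s) mod 2. f t)"
proof -
  define g where "g t = (if t mod 2 = (c+s) mod 2 then f t else 0)" for t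
  have par: "((s+i) mod e) mod 2 = (s+i) mod 2" for i using assms(2) by (simp add: mod_mod_cancel)
  have "(\<Sum>i | i < e \<and> i mod 2 = c. f ((s+i) mod e)) = (\<Sum>i<e. if i mod 2 = c then f ((s+i) mod e) else 0)"
    by (simp add: sum.If_cases lessThan_def Collect_conj_eq Int_commute)
  also have "\<dots> = (\<Sum>i<e. g ((s+i) mod e))"
  proof (rule sum.cong[OF refl])
    fix i
    have "(i mod 2 = c) \<longleftrightarrow> ((s+i) mod 2 = (c+s) mod 2)" using assms(3) by presburger
    then show "(if i mod 2 = c then f ((s+i) mod e) else 0) = g ((s+i) mod e)"
      unfolding g_def par by simp
  qed
  also have "\<dots> = (\<Sum>t<e. g t)" by (rule rot_sum[OF assms(1)])
  also have "\<dots> = (\<Sum>t | t < e \<and> t mod 2 = (c+s) mod 2. f t)"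
    unfolding g_def by (simp add: sum.If_cases lessThan_def Collect_conj_eq Int_commute)
  finally show ?thesis .
qed

lemma cs_real:
  fixes c :: "'b \<Rightarrow> real"
  assumes "finite T" "card T > 0"
  shows "(\<Sum>v\<in>T. c v)^2 \<le> real (card T) * (\<Sum>v\<in>T. (c v)^2)"
proof -
  define n where "n = real (card T)"
  define m where "m = (\<Sum>v\<in>T. c v) / n"
  have n: "n > 0" using assms(2) by (simp add: n_def)
  have "0 \<le> (\<Sum>v\<in>T. (c v - m)^2)" by (simp add: sum_nonneg)
  also have "\<dots> = (\<Sum>v\<in>T. (c v)^2 + m^2 - 2*m*c v)"
    by (rule sum.cong[OF refl]) (simp add: power2_diff algebra_simps)
  also have "\<dots> = (\<Sum>v\<in>T. (c v)^2) + (\<Sum>v\<in>T. m^2) - (\<Sum>v\<in>T. 2*m*c v)"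
    by (simp add: sum.distrib sum_subtractf)
  also have "(\<Sum>v\<in>T. 2*m*c v) = 2*m*(\<Sum>v\<in>T. c v)" by (simp add: sum_distrib_left)
  also have "(\<Sum>v\<in>T. m^2) = n*m^2" by (simp add: n_def)
  also have "(\<Sum>v\<in>T. (c v)^2) + n*m^2 - 2*m*(\<Sum>v\<in>T. c v) = (\<Sum>v\<in>T. (c v)^2) - (\<Sum>v\<in>T. c v)^2 / n"
    using n by (simp add: m_def power2_eq_square field_simps)
  finally have "(\<Sum>v\<in>T. c v)^2 / n \<le> (\<Sum>v\<in>T. (c v)^2)" by simp
  then show ?thesis using n by (simp add: n_def divide_le_eq mult.commute)
qed

lemma cs_pairs:
  fixes key :: "'a \<Rightarrow> 'b"
  assumes "finite S" "finite T" "key ` S \<subseteq> T" "card T > 0"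
  shows "real (card {(a,b). a\<in>S \<and> b\<in>S \<and> a\<noteq>b \<and> key a = key b}) \<ge> real (card S)^2 / real (card T) - real (card S)"
proof -
  define cnt where "cnt v = card {a\<in>S. key a = v}" for v
  have cS: "card S = (\<Sum>v\<in>T. cnt v)"
    using sum.group[OF assms(1,2,3), of "\<lambda>_. (1::nat)"] by (simp add: cnt_def)
  define D where "D = {(a,b). a\<in>S \<and> b\<in>S \<and> key a = key b}"
  have "D = Sigma S (\<lambda>a. {b\<in>S. key b = key a})" unfolding D_def by auto
  then have "card D = (\<Sum>a\<in>S. cnt (key a))" using assms(1)
    by (simp add: card_SigmaI cnt_def)
  also have "\<dots> = (\<Sum>v\<in>T. \<Sum>a\<in>{x\<in>S. key x = v}. cnt (key a))"
    using sum.group[OF assms(1,2,3), of "\<lambda>a. cnt (key a)"] by simp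
  also have "\<dots> = (\<Sum>v\<in>T. cnt v * cnt v)"
    by (rule sum.cong[OF refl]) (simp add: cnt_def)
  finally have cD: "card D = (\<Sum>v\<in>T. cnt v * cnt v)" .
  define Q where "Q = {(a,b). a\<in>S \<and> b\<in>S \<and> a\<noteq>b \<and> key a = key b}"
  have DQ: "D = Q \<union> (\<lambda>a. (a,a)) ` S" unfolding D_def Q_def by auto
  have "D \<subseteq> S \<times> S" unfolding D_def by auto
  then have fD: "finite D" using assms(1) by (meson finite_SigmaI finite_subset)
  have "card D = card Q + card ((\<lambda>a. (a,a)) ` S)"
    unfolding DQ by (rule card_Un_disjoint) (use fD DQ Q_def in auto)
  moreover have "card ((\<lambda>a. (a,a)) ` S) = card S" by (rule card_image) (simp add: inj_on_def)
  ultimately have "real (card Q) = real (card D) - real (card S)" by simp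
  moreover have "real (card S)^2 / real (card T) \<le> real (card D)"
  proof -
    have a: "real (card S) = (\<Sum>v\<in>T. real (cnt v))" unfolding cS by simp
    have b: "real (card D) = (\<Sum>v\<in>T. (real (cnt v))^2)" unfolding cD by (simp add: power2_eq_square)
    have "real (card S)^2 \<le> real (card T) * real (card D)"
      unfolding a b by (rule cs_real[OF assms(2,4)])
    moreover have "real (card T) > 0" using assms(4) by simp
    ultimately show ?thesis by (simp add: pos_divide_le_eq mult.commute[of "real (card T)"])
  qed
  ultimately have "real (card Q) \<ge> real (card S)^2 / real (card T) - real (card S)"
    by (rule_tac ord_le_eq_trans[of _ "real (card D) - real (card S)"]) auto
  then show ?thesis by (simp only: Q_def)
qed


lemma Mw00: "\<not> levinMw D 0 0"
  unfolding levinMw_def lexvec_def by simp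

lemma Mw10: "levinMw D 1 0"
proof -
  have "{j. j < 2^D \<and> levinM D 0 j \<and> lexvec (2^D) 1 j} = {2^D - 1}"
  proof (rule set_eqI, rule iffI)
    fix j assume j: "j \<in> {j. j < 2^D \<and> levinM D 0 j \<and> lexvec (2^D) 1 j}"
    show "j \<in> {2^D - 1}"
    proof (rule ccontr)
      assume "j \<notin> {2^D - 1}"
      then have "2^D - 1 - j \<ge> 1" using j by auto
      then have "(2::nat) \<le> 2^(2^D - 1 - j)" using power_increasing[of 1 "2^D - 1 - j" "2::nat"] by simp
      then have "(1::nat) div 2^(2^D - 1 - j) = 0" by simp
      then show False using j unfolding lexvec_def by simp
    qed
  next
    fix j assume "j \<in> {2^D - 1::nat}"
    then show "j \<in> {j. j < 2^D \<and> levinM D 0 j \<and> lexvec (2^D) 1 j}"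
      by (simp add: row0 lexvec_def)
  qed
  then show ?thesis unfolding levinMw_def by simp
qed

lemma nonconst0: "\<forall>q. \<exists>p\<ge>q. \<not> levin_bit p"
proof
  fix q
  have "levin_bit (P q + 2^q*0 + 0) = levinMw q 0 0" by (rule levin_bit_loc) simp_all
  then have "\<not> levin_bit (P q)" using Mw00 by simp
  then show "\<exists>p\<ge>q. \<not> levin_bit p" using P_ge[of q] by blast
qed

lemma nonconst1: "\<forall>q. \<exists>p\<ge>q. levin_bit p"
proof
  fix q
  have "(1::nat) < 2^(2^q)" by (rule one_less_power) simp_all
  then have "levin_bit (P q + 2^q*1 + 0) = levinMw q 1 0" by (intro levin_bit_loc) simp_all
  then have "levin_bit (P q + 2^q)" using Mw10 by simp
  then show "\<exists>p\<ge>q. levin_bit p" using P_ge[of q] by (intro exI[of _ "P q + 2^q"]) simp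
qed

lemma P_bound: "2 * P d \<le> L d"
proof (induction d)
  case 0 then show ?case by (simp add: P_def)
next
  case (Suc d)
  have "L (Suc d) = 2 * L d * 2^(2^d)" unfolding L_def by (simp add: power_mult_distrib power_add mult_2 algebra_simps)
  moreover have "(2::nat) \<le> 2^(2^d)" using power_increasing[of 1 "2^d" "2::nat"] by simp
  ultimately have "4 * L d \<le> L (Suc d)" using mult_le_mono2[of 2 "2^(2^d)" "2 * L d"] by simp
  moreover have "P (Suc d) = P d + L d" by (simp add: P_def)
  ultimately show ?case using Suc.IH by linarith
qed

lemma two_d: "2 * d \<le> (2::nat)^d"
proof (induction d)
  case (Suc d)
  have "1 \<le> (2::nat)^d" by simp
  then show ?case using Suc by (cases d) auto
qed simp


lemma window:
  assumes "1 \<le> d" "k < 2^(2^d - 2)" "s \<le> 2^d - d" "i < 2^d + d"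
  shows "levin_bit (P (Suc d) + 2*2^d*k + s + i) = levinMw d k ((s+i) mod 2^d)"
proof -
  have dd: "d \<le> 2^d" using two_d[of d] by linarith
  have k1: "k < 2^(2^d)" using assms(2) by (meson diff_le_self less_le_trans one_le_numeral power_increasing)
  have k2: "k < 2^(2^Suc d)"
  proof -
    have "(2::nat)^(2^d) \<le> 2^(2^Suc d)" by (intro power_increasing) simp_all
    then show ?thesis using k1 by linarith
  qed
  have "2^d - d + d = (2::nat)^d" using dd by simp
  then have "s + i < 2*2^d" using assms(3,4) by linarith
  then have si: "s + i < 2^Suc d" by simp
  have "levin_bit (P (Suc d) + 2^Suc d*k + (s + i)) = levinMw (Suc d) k (s+i)"
    by (rule levin_bit_loc[OF k2 si])
  also have "\<dots> = levinMw d k ((s+i) mod 2^d)"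
    by (rule doubled[OF k1]) (use si in simp)
  finally show ?thesis by (simp add: add.assoc)
qed

lemma window_period:
  assumes "1 \<le> d" "k < 2^(2^d - 2)" "s \<le> 2^d - d" "2^d \<le> i" "i < 2^d + d"
  shows "levin_bit (P (Suc d) + 2*2^d*k + s + i) = levin_bit (P (Suc d) + 2*2^d*k + s + (i - 2^d))"
proof -
  have "(s + i) mod 2^d = (s + (i - 2^d)) mod 2^d"
  proof -
    have e: "s + i = (s + (i - 2^d)) + 2^d" using assms(4) by simp
    have "(s + i) mod 2^d = ((s + (i - 2^d)) + 2^d) mod 2^d" unfolding e by (rule refl)
    also have "\<dots> = (s + (i - 2^d)) mod 2^d" by (rule mod_add_self2)
    finally show ?thesis .
  qed
  then show ?thesis using window[OF assms(1-3) assms(5)] window[OF assms(1-3), of "i - 2^d"] assms(4,5)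
    by simp
qed

lemma window_class:
  assumes "1 \<le> d" "k < 2^(2^d - 2)" "s \<le> 2^d - d" "c < 2"
  shows "even (\<Sum>i | i < 2^d \<and> i mod 2 = c. (of_bool (levin_bit (P (Suc d) + 2*2^d*k + s + i)) :: nat))"
proof -
  have "(\<Sum>i | i < 2^d \<and> i mod 2 = c. (of_bool (levin_bit (P (Suc d) + 2*2^d*k + s + i)) :: nat))
      = (\<Sum>i | i < 2^d \<and> i mod 2 = c. (of_bool (levinMw d k ((s+i) mod 2^d)) :: nat))"
    by (rule sum.cong[OF refl]) (use window[OF assms(1-3)] in simp)
  also have "\<dots> = (\<Sum>t | t < 2^d \<and> t mod 2 = (c+s) mod 2. (of_bool (levinMw d k t) :: nat))"
    by (rule rot_class_sum[where f="\<lambda>t. of_bool (levinMw d k t)"]) (use assms(1,4) in simp_all)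
  finally show ?thesis using class_even[OF assms(1,2), of "(c+s) mod 2"] by simp
qed


lemma key_eq:
  assumes d: "1 \<le> d" and k: "k < 2^(2^d-2)" and s: "s \<le> 2^d - d"
    and k': "k' < 2^(2^d-2)" and s': "s' \<le> 2^d - d"
    and key: "{i \<in> {2..<2^d}. levin_bit (a + i)} = {i \<in> {2..<2^d}. levin_bit (b + i)}"
    and a: "a = P (Suc d) + 2*2^d*k + s" and b: "b = P (Suc d) + 2*2^d*k' + s'"
  shows "\<forall>q < 2^d + d. levin_bit (a+q) = levin_bit (b+q)"
proof -
  define e :: nat where "e = 2^d"
  have e2: "2 \<le> e" using d unfolding e_def using power_increasing[of 1 d "2::nat"] by simp
  have de: "d < e" using two_d[of d] d unfolding e_def by linarith
  have mid: "levin_bit (a+i) = levin_bit (b+i)" if "2 \<le> i" "i < e" for i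
  proof -
    have "i \<in> {i \<in> {2..<2^d}. levin_bit (a + i)} \<longleftrightarrow> i \<in> {i \<in> {2..<2^d}. levin_bit (b + i)}"
      using key by simp
    then show ?thesis using that unfolding e_def by simp
  qed
  have ca: "even (\<Sum>i | i < e \<and> i mod 2 = c. (of_bool (levin_bit (a + i)) :: nat))" if "c < 2" for c
    using window_class[OF d k s that] unfolding a e_def by simp
  have cb: "even (\<Sum>i | i < e \<and> i mod 2 = c. (of_bool (levin_bit (b + i)) :: nat))" if "c < 2" for c
    using window_class[OF d k' s' that] unfolding b e_def by simp
  have low: "levin_bit (a+c) = levin_bit (b+c)" if c: "c < 2" for c
  proof -
    define C' where "C' = {i. 2 \<le> i \<and> i < e \<and> i mod 2 = c}"
    have C: "{i. i < e \<and> i mod 2 = c} = insert c C'" unfolding C'_def using c e2 by (auto; presburger)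
    have nc: "c \<notin> C'" unfolding C'_def using c by simp
    have fin: "finite C'" unfolding C'_def by simp
    have R: "(\<Sum>i\<in>C'. (of_bool (levin_bit (a + i)) :: nat)) = (\<Sum>i\<in>C'. (of_bool (levin_bit (b + i)) :: nat))"
      by (rule sum.cong[OF refl]) (use mid in \<open>auto simp: C'_def\<close>)
    have "even ((of_bool (levin_bit (a + c)) :: nat) + (\<Sum>i\<in>C'. (of_bool (levin_bit (a + i)) :: nat)))"
      using ca[OF c] unfolding C sum.insert[OF fin nc] .
    moreover have "even ((of_bool (levin_bit (b + c)) :: nat) + (\<Sum>i\<in>C'. (of_bool (levin_bit (a + i)) :: nat)))"
      using cb[OF c] unfolding C sum.insert[OF fin nc] R .
    ultimately show ?thesis by (cases "levin_bit (a+c)"; cases "levin_bit (b+c)") auto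
  qed
  have alle: "levin_bit (a+q) = levin_bit (b+q)" if "q < e" for q
    using low mid that by (cases "q < 2") auto
  show ?thesis
  proof (intro allI impI)
    fix q assume q: "q < 2^d + d"
    show "levin_bit (a+q) = levin_bit (b+q)"
    proof (cases "q < e")
      case True then show ?thesis using alle by simp
    next
      case False
      then have qe: "2^d \<le> q" unfolding e_def by simp
      have "levin_bit (a+q) = levin_bit (a + (q - 2^d))"
        using window_period[OF d k s qe q] unfolding a .
      moreover have "levin_bit (b+q) = levin_bit (b + (q - 2^d))"
        using window_period[OF d k' s' qe q] unfolding b .
      moreover have "q - 2^d < e" using q de unfolding e_def by linarith
      ultimately show ?thesis using alle by simp
    qed
  qed
qed


lemma main_bound:
  assumes d: "1 \<le> d"
  shows "pair_corr (\<lambda>n. frac_part (2 ^ n * levin)) (2 ^ (2 ^ d + d + 1)) 2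
           \<ge> (real (2 ^ d) - real d + 1) * (real (2 ^ d) - real d) / (8 * real (2 ^ d))"
proof -
  define x where "x = (\<lambda>n::nat. frac_part (2 ^ n * levin))"
  define e :: nat where "e = 2^d"
  define h :: nat where "h = 2^(e-2)"
  define N :: nat where "N = 2^(e+d+1)"
  define f where "f = (\<lambda>(k,s). P (Suc d) + 2*e*k + s)"
  define I where "I = {..<h} \<times> {0..e-d}"
  define S where "S = f ` I"
  define key where "key a = {i \<in> {2..<e}. levin_bit (a + i)}" for a
  define T where "T = Pow {2..<e}"
  have e2: "2 \<le> e" using d unfolding e_def using power_increasing[of 1 d "2::nat"] by simp
  have de: "d \<le> e" using two_d[of d] unfolding e_def by linarith
  have hpos: "0 < h" unfolding h_def by simp
  have inj: "inj_on f I"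
  proof (rule inj_onI)
    fix u v assume u: "u \<in> I" and v: "v \<in> I" and fe: "f u = f v"
    obtain k s where u': "u = (k,s)" by (cases u)
    obtain k' s' where v': "v = (k',s')" by (cases v)
    have ss: "s < 2*e" "s' < 2*e" using u v de e2 unfolding u' v' I_def by auto
    have eq: "s + k * (2*e) = s' + k' * (2*e)" using fe unfolding f_def u' v' by (simp add: algebra_simps)
    have "(s + k * (2*e)) div (2*e) = k" using ss e2 by simp
    moreover have "(s' + k' * (2*e)) div (2*e) = k'" using ss e2 by simp
    ultimately have "k = k'" using eq by simp
    then show "u = v" using eq unfolding u' v' by simp
  qed
  have cardS: "card S = h * (e - d + 1)" unfolding S_def I_def
    using card_image[OF inj[unfolded I_def]] by (simp add: card_cartesian_product)
  have finS: "finite S" unfolding S_def I_def by simp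
  have finT: "finite T" unfolding T_def by simp
  have cardT: "card T = h" unfolding T_def h_def by (simp add: card_Pow)
  have keyT: "key ` S \<subseteq> T" unfolding T_def key_def by auto
  have memS: "\<exists>k s. k < 2^(2^d-2) \<and> s \<le> 2^d - d \<and> a = P (Suc d) + 2*2^d*k + s" if "a \<in> S" for a
    using that unfolding S_def I_def f_def h_def e_def by auto
  have rangeS: "a \<in> {1..N}" if aS: "a \<in> S" for a
  proof -
    obtain k s where ks: "k < h" "s \<le> e - d" "a = P (Suc d) + 2*e*k + s"
      using memS[OF aS] unfolding h_def e_def by blast
    have A: "2 * P d \<le> e * 2^e" using P_bound[of d] unfolding L_def e_def .
    have B: "e*k + e \<le> e*h" using mult_le_mono2[of "k+1" h e] ks(1) by simp
    have C: "4*(e*h) = e*2^e"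
    proof -
      have "e = (e-2)+2" using e2 by simp
      then have "(2::nat)^e = 2^((e-2)+2)" by (rule arg_cong)
      then have "(2::nat)^e = 2^(e-2) * 2^2" by (simp only: power_add)
      then show ?thesis unfolding h_def by simp
    qed
    have Ps: "P (Suc d) = P d + e * 2^e" by (simp add: P_def L_def e_def)
    have "a + 0 \<le> P d + e*2^e + 2*(e*k) + e" using ks(2,3) Ps by simp
    also have "\<dots> \<le> 2*(e*2^e)" using A B C by linarith
    also have "\<dots> = N" unfolding N_def e_def by (simp add: power_add)
    finally have "a \<le> N" by simp
    moreover have "1 \<le> a" using ks(3) P_ge[of "Suc d"] by simp
    ultimately show ?thesis by simp
  qed
  define Q where "Q = {(a,b). a\<in>S \<and> b\<in>S \<and> a\<noteq>b \<and> key a = key b}"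
  define Pairs where "Pairs = {(i, j). i \<in> {1..N} \<and> j \<in> {1..N} \<and> i \<noteq> j \<and> dist_int (x i - x j) < 2 / real N}"
  have QP: "Q \<subseteq> Pairs"
  proof
    fix ab assume "ab \<in> Q"
    then obtain a b where ab: "ab = (a,b)" "a \<in> S" "b \<in> S" "a \<noteq> b" "key a = key b"
      unfolding Q_def by auto
    obtain k s where ks: "k < 2^(2^d-2)" "s \<le> 2^d - d" "a = P (Suc d) + 2*2^d*k + s" using memS[OF ab(2)] by blast
    obtain k' s' where ks': "k' < 2^(2^d-2)" "s' \<le> 2^d - d" "b = P (Suc d) + 2*2^d*k' + s'" using memS[OF ab(3)] by blast
    have agree: "\<forall>q < 2^d + d. levin_bit (a+q) = levin_bit (b+q)"
      by (rule key_eq[OF d ks(1,2) ks'(1,2) _ ks(3) ks'(3)]) (use ab(5) in \<open>simp add: key_def e_def\<close>)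
    have "dist_int (x a - x b) < 1 / 2^(2^d+d)"
      unfolding x_def by (rule close_pair[OF nonconst0 nonconst1 agree])
    also have "1 / 2^(2^d+d) = 2 / real N" unfolding N_def e_def by simp
    finally show "ab \<in> Pairs" unfolding Pairs_def using ab rangeS by auto
  qed
  have finP: "finite Pairs"
    by (rule finite_subset[of _ "{1..N} \<times> {1..N}"]) (auto simp: Pairs_def)
  have cQ: "real (card Q) \<le> real (card Pairs)" using card_mono[OF finP QP] by simp
  have cs: "real (card Q) \<ge> real (card S)^2 / real (card T) - real (card S)"
    unfolding Q_def by (rule cs_pairs[OF finS finT keyT]) (simp add: cardT hpos)
  define A where "A = real e - real d + 1"
  have "real (e - d + 1) = A" unfolding A_def using de by (simp add: of_nat_diff)
  then have rS: "real (card S) = real h * A" unfolding cardS by (simp only: of_nat_mult)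
  have "real (card S)^2 / real (card T) - real (card S) = real h * A * (A - 1)"
    unfolding rS cardT using hpos by (simp add: power2_eq_square field_simps)
  then have cQ2: "real (card Pairs) \<ge> real h * A * (A - 1)" using cs cQ by linarith
  have rN: "real N = 8 * real h * real e"
  proof -
    have "e+d+1 = ((e-2)+d)+3" using e2 by simp
    then have "N = 2^(((e-2)+d)+3)" unfolding N_def by (rule arg_cong)
    then have "N = 2^(e-2) * 2^d * 2^3" by (simp only: power_add)
    then show ?thesis unfolding h_def e_def by simp
  qed
  have "pair_corr x N 2 = real (card Pairs) / real N" unfolding pair_corr_def Pairs_def ..
  also have "\<dots> \<ge> real h * A * (A - 1) / real N"
    using cQ2 by (intro divide_right_mono) simp_all
  finally have "pair_corr x N 2 \<ge> real h * A * (A - 1) / (8 * real h * real e)" unfolding rN .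
  also have "real h * A * (A - 1) / (8 * real h * real e) = A * (A - 1) / (8 * real e)"
    using hpos by simp
  finally show ?thesis unfolding x_def N_def A_def e_def by simp
qed


lemma lower_growth:
  fixes d :: nat
  shows "real d / 16 \<le> (real (2 ^ d) - real d + 1) * (real (2 ^ d) - real d) / (8 * real (2 ^ d))"
proof -
  define y where "y = real ((2::nat) ^ d)"
  define z where "z = real d"
  have ypos: "y > 0" unfolding y_def by simp
  have "real (2*d) \<le> real ((2::nat)^d)" using two_d[of d] by (simp only: of_nat_le_iff)
  then have yz: "2 * z \<le> y" unfolding y_def z_def by simp
  have z0: "0 \<le> z" unfolding z_def by simp
  have "(y/2) * (y/2) \<le> (y - z + 1) * (y - z)"
    by (rule mult_mono) (use yz z0 ypos in linarith)+
  then have "(y/2) * (y/2) / (8*y) \<le> (y - z + 1) * (y - z) / (8*y)"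
    using ypos by (intro divide_right_mono) simp_all
  moreover have "(y/2) * (y/2) / (8*y) = y / 32" using ypos by (simp add: field_simps)
  moreover have "z / 16 \<le> y / 32" using yz by simp
  ultimately show ?thesis unfolding y_def z_def by simp
qed

theorem mainTheorem8:
  fixes x :: "nat \<Rightarrow> real"
  defines "x \<equiv> (\<lambda>n. frac_part (2 ^ n * levin))"
  shows "(\<forall>d::nat. d \<ge> 1 \<longrightarrow>
            pair_corr x (2 ^ (2 ^ d + d + 1)) 2
              \<ge> (real (2 ^ d) - real d + 1) * (real (2 ^ d) - real d) / (8 * real (2 ^ d)))
         \<and> filterlim (\<lambda>d. pair_corr x (2 ^ (2 ^ d + d + 1)) 2) at_top sequentially
         \<and> \<not> poissonian_pc x"
proof -
  have B: "\<forall>d::nat. d \<ge> 1 \<longrightarrow>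
            pair_corr x (2 ^ (2 ^ d + d + 1)) 2
              \<ge> (real (2 ^ d) - real d + 1) * (real (2 ^ d) - real d) / (8 * real (2 ^ d))"
    using main_bound unfolding x_def by blast
  have F: "filterlim (\<lambda>d. pair_corr x (2 ^ (2 ^ d + d + 1)) 2) at_top sequentially"
    unfolding filterlim_at_top
  proof
    fix Z :: real
    show "eventually (\<lambda>d. Z \<le> pair_corr x (2 ^ (2 ^ d + d + 1)) 2) sequentially"
      unfolding eventually_sequentially
    proof (intro exI allI impI)
      fix d assume dN: "max 1 (nat \<lceil>16 * Z\<rceil>) \<le> d"
      then have "16 * Z \<le> real d" using real_nat_ceiling_ge[of "16*Z"] by linarith
      then have "Z \<le> real d / 16" by simp
      also have "\<dots> \<le> pair_corr x (2 ^ (2 ^ d + d + 1)) 2"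
      proof -
        have "1 \<le> d" using dN by simp
        then show ?thesis using lower_growth[of d] B by (meson order_trans)
      qed
      finally show "Z \<le> pair_corr x (2 ^ (2 ^ d + d + 1)) 2" .
    qed
  qed
  have NP: "\<not> poissonian_pc x"
  proof
    assume "poissonian_pc x"
    then have t: "(\<lambda>N. pair_corr x N 2) \<longlonglongrightarrow> 2 * 2" unfolding poissonian_pc_def
      by (elim allE[of _ 2]) simp
    have sm: "strict_mono (\<lambda>d::nat. (2::nat) ^ (2 ^ d + d + 1))"
      unfolding strict_mono_Suc_iff
    proof
      fix d :: nat
      have "2 ^ d + d + 1 < 2 ^ Suc d + Suc d + 1" by simp
      then show "(2::nat) ^ (2 ^ d + d + 1) < 2 ^ (2 ^ Suc d + Suc d + 1)"
        by (rule power_strict_increasing) simp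
    qed
    have "(\<lambda>d. pair_corr x (2 ^ (2 ^ d + d + 1)) 2) \<longlonglongrightarrow> 2 * 2"
      using filterlim_compose[OF t filterlim_subseq[OF sm]] by simp
    then show False
      using not_tendsto_and_filterlim_at_infinity[OF sequentially_bot _ filterlim_at_top_imp_at_infinity[OF F]]
      by blast
  qed
  show ?thesis using B F NP by blast
qed


end
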